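(* In the transactional panorama model with the lenses and metrics described in the context, each $k$-relaxed variant has no greater staleness and no smaller invisibility than its corresponding base lens: $S(k\text{-GCNB})\le S(\mathrm{GCNB})$, $I(k\text{-GCNB})\ge I(\mathrm{GCNB})$, $S(k\text{-LCNB})\le S(\mathrm{LCNB})$, $I(k\text{-LCNB})\ge I(\mathrm{LCNB})$, $S(k\text{-LCMB})\le S(\mathrm{LCMB})$, and $I(k\text{-LCMB})\ge I(\mathrm{LCMB})$, for any $k\ge 0$.
   Context: A view graph is a DAG on a set $N$ of nodes (source data and views). Write transactions are processed one at a time; write transaction $w^{t_i}$ creates version $G^{t_i}$ with state set $V^{t_i}$ containing, for each node $n_k$, either its computed new result $v_k^{t_i}$, a placeholder $UC_k^{t_i}$ if $w^{t_i}$ updates $n_k$ but has not yet computed it, or its result from the previous version if $n_k$ is not updated. A version is committed once all its new results are computed; at any time there is the committed graph (most recently committed version, no UCs) and the latest graph (version of the most recent write transaction). Read transactions $r^{s_1},\dots,r^{s_m}$ each read the views in the current viewport and return immediately a set $H^{s_i}$ of states (results or UCs); $Time(r^{s_i})$ is its return time. A returned state's timestamp is that of its version. Lenses: GCNB returns the viewport states from the committed graph. LCNB returns them from the more recent of the committed and latest graphs that has zero UCs for the viewport. LCMB: if reading either the committed or the latest graph preserves monotonicity (no view gets a state with smaller timestamp than previously read), behave like LCNB; otherwise read the latest graph. $k$-GCNB reads the latest graph if it has at most $k$ UCs in total, otherwise the committed graph. $k$-LCNB reads the more recent of the committed and latest graphs having at most $k$ UCs for the viewport. $k$-LCMB: if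 reading either graph preserves monotonicity, behave like $k$-LCNB; otherwise read the latest graph. Metrics for $R=\{r^{s_1},\dots,r^{s_m}\}$: invisibility $I(R)=\sum_{i=1}^{m-1}|H^{s_i}_{UC}|\,(Time(r^{s_{i+1}})-Time(r^{s_i}))$ where $H^{s_i}_{UC}$ is the set of UCs in $H^{s_i}$; staleness $S(R)=\sum_{i=1}^{m-1}\sum_{v_k^{t_j}\in H^{s_i}_{qr}}\mathbf{1}[v_k^{t_j}\notin V^{t_i}]\,(Time(r^{s_{i+1}})-Time(r^{s_i}))$ where $H^{s_i}_{qr}$ is the set of view results in $H^{s_i}$ and $G^{t_i}$ is the latest version before $r^{s_i}$ starts. $S(A)$, $I(A)$ denote these metrics under lens $A$; lenses are compared on the same write transactions, the same order of computing new view results, and the same sequence of read transactions. *)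

theory Defs
  imports Complex_Main
begin

text \<open>Versions are indexed by natural numbers:
  version 0 is the initial graph, write transaction j (for j in {1..W}) creates version j.
  A state is either a computed result  Res k j  (the result of node k computed for version j)
  or a placeholder  UC k j  (node k updated by write j but not yet computed).\<close>

datatype 'n state = Res 'n nat | UC 'n nat

fun ts :: "'n state \<Rightarrow> nat" where
  "ts (Res k j) = j" | "ts (UC k j) = j"

fun is_UC :: "'n state \<Rightarrow> bool" where
  "is_UC (Res k j) = False" | "is_UC (UC k j) = True"

fun is_Res :: "'n state \<Rightarrow> bool" where
  "is_Res (Res k j) = True" | "is_Res (UC k j) = False"

text \<open>An execution: view graph, write transactions (arrival times, updated node sets,
  times at which each new result is computed) and a sequence of read transactions
  (return times and viewports).\<close>

record 'n panorama =
  nodes    :: "'n set"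
  edges    :: "('n \<times> 'n) set"
  views    :: "'n set"
  nwrites  :: nat
  upd      :: "nat \<Rightarrow> 'n set"
  wtime    :: "nat \<Rightarrow> real"
  ctime    :: "nat \<Rightarrow> 'n \<Rightarrow> real"
  nreads   :: nat
  rtime    :: "nat \<Rightarrow> real"
  viewport :: "nat \<Rightarrow> 'n set"

definition wf_panorama :: "'n panorama \<Rightarrow> bool" where
  "wf_panorama P \<longleftrightarrow>
     finite (nodes P) \<and> edges P \<subseteq> nodes P \<times> nodes P \<and> acyclic (edges P) \<and>
     views P \<subseteq> nodes P \<and>
     (\<forall>j\<in>{1..nwrites P}. upd P j \<subseteq> nodes P) \<and>
     strict_mono_on {1..nwrites P} (wtime P) \<and>
     (\<forall>j\<in>{1..nwrites P}. \<forall>k\<in>upd P j. wtime P j \<le> ctime P j k) \<and>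
     (\<forall>i<nreads P. viewport P i \<subseteq> views P) \<and>
     (\<forall>i. Suc i < nreads P \<longrightarrow> rtime P i \<le> rtime P (Suc i))"

definition latest :: "'n panorama \<Rightarrow> real \<Rightarrow> nat" where
  "latest P tau = Max ({0} \<union> {j \<in> {1..nwrites P}. wtime P j \<le> tau})"

definition version_done :: "'n panorama \<Rightarrow> real \<Rightarrow> nat \<Rightarrow> bool" where
  "version_done P tau j \<longleftrightarrow> (\<forall>k\<in>upd P j. ctime P j k \<le> tau)"

text \<open>Committed version at time tau: the most recent version j (already created) such that
  all new results of versions 1..j have been computed (versions commit in order).\<close>
definition committed :: "'n panorama \<Rightarrow> real \<Rightarrow> nat" where
  "committed P tau = Max ({0} \<union> {j \<in> {1..nwrites P}. wtime P j \<le> tau \<and>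
                                    (\<forall>i\<in>{1..j}. version_done P tau i)})"

definition lastupd :: "'n panorama \<Rightarrow> nat \<Rightarrow> 'n \<Rightarrow> nat" where
  "lastupd P j k = Max ({0} \<union> {i \<in> {1..j}. k \<in> upd P i})"

definition state :: "'n panorama \<Rightarrow> real \<Rightarrow> nat \<Rightarrow> 'n \<Rightarrow> 'n state" where
  "state P tau j k = (let i = lastupd P j k in
      if i = 0 then Res k 0 else if ctime P i k \<le> tau then Res k i else UC k i)"

definition stateset :: "'n panorama \<Rightarrow> real \<Rightarrow> nat \<Rightarrow> 'n state set" where
  "stateset P tau j = (\<lambda>k. state P tau j k) ` nodes P"

definition nUC :: "'n panorama \<Rightarrow> real \<Rightarrow> nat \<Rightarrow> 'n set \<Rightarrow> nat" where
  "nUC P tau j A = card {k \<in> A. is_UC (state P tau j k)}"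

datatype lens = GCNB | LCNB | LCMB | kGCNB nat | kLCNB nat | kLCMB nat

text \<open>The more recent of the committed and the latest graph satisfying a condition
  (the committed graph is the fallback; it never contains UCs).\<close>
definition more_recent :: "'n panorama \<Rightarrow> real \<Rightarrow> (nat \<Rightarrow> bool) \<Rightarrow> nat" where
  "more_recent P tau c = (if c (latest P tau) then latest P tau else committed P tau)"

text \<open>Monotonicity: reading version g gives no viewport node a state with smaller
  timestamp than the largest one previously read for it (pm).\<close>
definition preserves_mono ::
  "'n panorama \<Rightarrow> real \<Rightarrow> 'n set \<Rightarrow> ('n \<Rightarrow> nat) \<Rightarrow> nat \<Rightarrow> bool" where
  "preserves_mono P tau A pm g \<longleftrightarrow> (\<forall>k\<in>A. pm k \<le> ts (state P tau g k))"

fun lens_choice :: "'n panorama \<Rightarrow> lens \<Rightarrow> real \<Rightarrow> 'n set \<Rightarrow> ('n \<Rightarrow> nat) \<Rightarrow> nat" where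
  "lens_choice P GCNB tau A pm = committed P tau"
| "lens_choice P LCNB tau A pm = more_recent P tau (\<lambda>g. nUC P tau g A = 0)"
| "lens_choice P LCMB tau A pm =
     (if preserves_mono P tau A pm (committed P tau) \<and> preserves_mono P tau A pm (latest P tau)
      then more_recent P tau (\<lambda>g. nUC P tau g A = 0) else latest P tau)"
| "lens_choice P (kGCNB k) tau A pm =
     (if nUC P tau (latest P tau) (nodes P) \<le> k then latest P tau else committed P tau)"
| "lens_choice P (kLCNB k) tau A pm = more_recent P tau (\<lambda>g. nUC P tau g A \<le> k)"
| "lens_choice P (kLCMB k) tau A pm =
     (if preserves_mono P tau A pm (committed P tau) \<and> preserves_mono P tau A pm (latest P tau)
      then more_recent P tau (\<lambda>g. nUC P tau g A \<le> k) else latest P tau)"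

primrec prevmax :: "'n panorama \<Rightarrow> lens \<Rightarrow> nat \<Rightarrow> 'n \<Rightarrow> nat" where
  "prevmax P L 0 = (\<lambda>k. 0)"
| "prevmax P L (Suc i) =
     (let g = lens_choice P L (rtime P i) (viewport P i) (prevmax P L i) in
      (\<lambda>k. if k \<in> viewport P i then max (prevmax P L i k) (ts (state P (rtime P i) g k))
           else prevmax P L i k))"

definition readver :: "'n panorama \<Rightarrow> lens \<Rightarrow> nat \<Rightarrow> nat" where
  "readver P L i = lens_choice P L (rtime P i) (viewport P i) (prevmax P L i)"

definition H :: "'n panorama \<Rightarrow> lens \<Rightarrow> nat \<Rightarrow> 'n state set" where
  "H P L i = (\<lambda>k. state P (rtime P i) (readver P L i) k) ` viewport P i"

definition invisibility :: "'n panorama \<Rightarrow> lens \<Rightarrow> real" where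
  "invisibility P L = (\<Sum>i<nreads P - 1.
      real (card {h \<in> H P L i. is_UC h}) * (rtime P (Suc i) - rtime P i))"

definition staleness :: "'n panorama \<Rightarrow> lens \<Rightarrow> real" where
  "staleness P L = (\<Sum>i<nreads P - 1.
      real (card {h \<in> H P L i. is_Res h \<and>
                   h \<notin> stateset P (rtime P i) (latest P (rtime P i))})
      * (rtime P (Suc i) - rtime P i))"

end

theory Submission
  imports Defs
begin

lemma ts_state: "ts (state P tau g k) = lastupd P g k"
  unfolding state_def Let_def by auto

lemma lastupd_mono: "g \<le> g' \<Longrightarrow> lastupd P g k \<le> lastupd P g' k"
  unfolding lastupd_def by (rule Max_mono) auto

lemma committed_le_latest: "committed P tau \<le> latest P tau"
  unfolding committed_def latest_def by (rule Max_mono) auto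

lemma committed_noUC: "\<not> is_UC (state P tau (committed P tau) k)"
proof -
  define c where "c = committed P tau"
  define S where "S = {j \<in> {1..nwrites P}. wtime P j \<le> tau \<and> (\<forall>i\<in>{1..j}. version_done P tau i)}"
  have cin: "c \<in> {0} \<union> S" unfolding c_def committed_def S_def by (rule Max_in) auto
  define i where "i = lastupd P c k"
  have iin: "i \<in> {0} \<union> {i \<in> {1..c}. k \<in> upd P i}"
    unfolding i_def lastupd_def by (rule Max_in) auto
  show ?thesis
  proof (cases "i = 0")
    case True then show ?thesis unfolding state_def i_def c_def by simp
  next
    case False
    then have i1: "i \<in> {1..c}" "k \<in> upd P i" using iin by auto
    then have "c \<noteq> 0" by auto
    then have "c \<in> S" using cin by auto
    then have "version_done P tau i" using i1 unfolding S_def by auto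
    then have "ctime P i k \<le> tau" using i1 unfolding version_done_def by auto
    then show ?thesis using False unfolding state_def i_def[symmetric] c_def[symmetric] Let_def
      by simp
  qed
qed

lemma readver_cases:
  "readver P L i = latest P (rtime P i) \<or> readver P L i = committed P (rtime P i)"
  unfolding readver_def by (cases L) (auto simp: more_recent_def)

lemma choice_LCMB:
  assumes "\<forall>k. pmL k \<le> pmK k"
  shows "lens_choice P LCMB tau A pmL \<le> lens_choice P (kLCMB n) tau A pmK \<and>
     (lens_choice P (kLCMB n) tau A pmK = latest P tau \<or>
      lens_choice P (kLCMB n) tau A pmK = lens_choice P LCMB tau A pmL)"
proof -
  have cl: "committed P tau \<le> latest P tau" by (rule committed_le_latest)
  have m: "preserves_mono P tau A pmK g \<Longrightarrow> preserves_mono P tau A pmL g" for g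
    using assms unfolding preserves_mono_def by (meson le_trans)
  show ?thesis
    using cl m[of "committed P tau"] m[of "latest P tau"]
    by (auto simp: more_recent_def)
qed

lemma prevmax_LCMB: "prevmax P LCMB i k \<le> prevmax P (kLCMB n) i k"
proof (induction i arbitrary: k)
  case 0 then show ?case by simp
next
  case (Suc i)
  have "lens_choice P LCMB (rtime P i) (viewport P i) (prevmax P LCMB i)
     \<le> lens_choice P (kLCMB n) (rtime P i) (viewport P i) (prevmax P (kLCMB n) i)"
    using choice_LCMB[of "prevmax P LCMB i" "prevmax P (kLCMB n) i"] Suc by blast
  then have "ts (state P (rtime P i) (lens_choice P LCMB (rtime P i) (viewport P i) (prevmax P LCMB i)) k)
     \<le> ts (state P (rtime P i) (lens_choice P (kLCMB n) (rtime P i) (viewport P i) (prevmax P (kLCMB n) i)) k)"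
    by (simp add: ts_state lastupd_mono)
  then show ?case using Suc[of k] by (auto simp: Let_def)
qed

lemma key:
  assumes "(B, K) \<in> {(GCNB, kGCNB n), (LCNB, kLCNB n), (LCMB, kLCMB n)}"
  shows "readver P K i = latest P (rtime P i) \<or> readver P K i = readver P B i"
proof -
  consider "B = GCNB" "K = kGCNB n" | "B = LCNB" "K = kLCNB n" | "B = LCMB" "K = kLCMB n"
    using assms by auto
  then show ?thesis
  proof cases
    case 1 then show ?thesis unfolding readver_def by auto
  next
    case 2 then show ?thesis unfolding readver_def by (auto simp: more_recent_def)
  next
    case 3
    have "\<forall>k. prevmax P LCMB i k \<le> prevmax P (kLCMB n) i k" using prevmax_LCMB by (metis (no_types))
    then show ?thesis using 3 choice_LCMB unfolding readver_def by blast
  qed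
qed

lemma per_read:
  assumes "(B, K) \<in> {(GCNB, kGCNB n), (LCNB, kLCNB n), (LCMB, kLCMB n)}"
    and vp: "viewport P i \<subseteq> nodes P"
  shows "card {h \<in> H P K i. is_Res h \<and> h \<notin> stateset P (rtime P i) (latest P (rtime P i))}
       \<le> card {h \<in> H P B i. is_Res h \<and> h \<notin> stateset P (rtime P i) (latest P (rtime P i))}
     \<and> card {h \<in> H P B i. is_UC h} \<le> card {h \<in> H P K i. is_UC h}"
proof -
  let ?t = "rtime P i"
  have stl: "{h \<in> H P L i. is_Res h \<and> h \<notin> stateset P ?t (latest P ?t)} = {}"
    if "readver P L i = latest P ?t" for L
    using that vp unfolding H_def stateset_def by auto
  have invc: "{h \<in> H P L i. is_UC h} = {}"
    if "readver P L i = committed P ?t" for L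
    using that committed_noUC[of P ?t] unfolding H_def by auto
  from key[OF assms(1)] show ?thesis
  proof
    assume kl: "readver P K i = latest P ?t"
    have s: "card {h \<in> H P K i. is_Res h \<and> h \<notin> stateset P ?t (latest P ?t)} = 0"
      using stl[OF kl] by (metis card.empty)
    from readver_cases[of P B i] show ?thesis
    proof
      assume "readver P B i = latest P ?t"
      then have "H P B i = H P K i" using kl unfolding H_def by simp
      then show ?thesis by simp
    next
      assume "readver P B i = committed P ?t"
      then have "card {h \<in> H P B i. is_UC h} = 0" using invc by (metis card.empty)
      then show ?thesis using s by simp
    qed
  next
    assume "readver P K i = readver P B i"
    then have "H P B i = H P K i" unfolding H_def by simp
    then show ?thesis by simp
  qed
qed

lemma pair_ineq:
  assumes wf: "wf_panorama P"
    and bk: "(B, K) \<in> {(GCNB, kGCNB n), (LCNB, kLCNB n), (LCMB, kLCMB n)}"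
  shows "staleness P K \<le> staleness P B \<and> invisibility P K \<ge> invisibility P B"
proof -
  have d: "0 \<le> rtime P (Suc i) - rtime P i" if "i < nreads P - 1" for i
    using wf that unfolding wf_panorama_def by auto
  have vp: "viewport P i \<subseteq> nodes P" if "i < nreads P - 1" for i
  proof -
    have "i < nreads P" using that by simp
    then show ?thesis using wf unfolding wf_panorama_def by blast
  qed
  have "staleness P K \<le> staleness P B"
    unfolding staleness_def
    by (rule sum_mono, rule mult_right_mono) (use per_read[OF bk vp] d in auto)
  moreover have "invisibility P K \<ge> invisibility P B"
    unfolding invisibility_def
    by (rule sum_mono, rule mult_right_mono) (use per_read[OF bk vp] d in auto)
  ultimately show ?thesis by simp
qed

theorem theorem2p11:
  fixes P :: "'n panorama" and k :: nat
  assumes "wf_panorama P"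
  shows "staleness P (kGCNB k) \<le> staleness P GCNB \<and> invisibility P (kGCNB k) \<ge> invisibility P GCNB \<and>
         staleness P (kLCNB k) \<le> staleness P LCNB \<and> invisibility P (kLCNB k) \<ge> invisibility P LCNB \<and>
         staleness P (kLCMB k) \<le> staleness P LCMB \<and> invisibility P (kLCMB k) \<ge> invisibility P LCMB"
  using pair_ineq[OF assms, of GCNB "kGCNB k" k] pair_ineq[OF assms, of LCNB "kLCNB k" k]
    pair_ineq[OF assms, of LCMB "kLCMB k" k] by simp

end
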